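(* Let $(\Omega,\mathcal{F},\mathbb{P})$ be a probability space, $(E,\mathcal{E})$ a measurable space, $V\colon E\to[0,\infty]$ measurable, $Z\colon\mathbb{N}_0\times\Omega\to E$ a stochastic process, and let $\gamma_n\in[0,\infty)$, $\delta_n\in(0,\infty]$, $\Omega_n\in\mathcal{F}$, $n\in\mathbb{N}_0$, satisfy $\Omega_0=\Omega$, $\Omega_n\setminus\Omega_{n+1}\subseteq\{V(Z_n)>\delta_n\}$ and $\mathbb{E}[\mathbb{1}_{\Omega_{n+1}}V(Z_{n+1})]\le\gamma_n\,\mathbb{E}[\mathbb{1}_{\Omega_n}V(Z_n)]$ for all $n\in\mathbb{N}_0$. Then for all $n\in\mathbb{N}_0$, $p\in[1,\infty]$ and all measurable $\bar V\colon E\to[0,\infty]$ with $\bar V\le V$: $$\mathbb{E}[\mathbb{1}_{\Omega_n}V(Z_n)]\le\Big(\prod_{k=0}^{n-1}\gamma_k\Big)\mathbb{E}[V(Z_0)],\qquad \mathbb{P}[(\Omega_n)^c]\le\Big(\sum_{k=0}^{n-1}\frac{\prod_{l=0}^{k-1}\gamma_l}{\delta_k}\Big)\mathbb{E}[V(Z_0)],$$ $$\mathbb{E}[\bar V(Z_n)]\le\Big(\prod_{k=0}^{n-1}\gamma_k\Big)\mathbb{E}[V(Z_0)]+\|\bar V(Z_n)\|_{L^p(\Omega;\mathbb{R})}\Big[\Big(\sum_{k=0}^{n-1}\frac{\prod_{l=0}^{k-1}\gamma_l}{\delta_k}\Big)\mathbb{E}[V(Z_0)]\Big]^{(1-1/p)}.$$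 *)

theory Defs
  imports "HOL-Probability.Probability"
begin

definition ennpow :: "ennreal \<Rightarrow> real \<Rightarrow> ennreal" where
  "ennpow x r = (if r = 0 then 1 else if x = \<infinity> then \<infinity> else ennreal (enn2real x powr r))"

definition Lp_norm :: "'a measure \<Rightarrow> ennreal \<Rightarrow> ('a \<Rightarrow> ennreal) \<Rightarrow> ennreal" where
  "Lp_norm M p f = (if p = \<infinity> then esssup M f
     else ennpow (\<integral>\<^sup>+ x. ennpow (f x) (enn2real p) \<partial>M) (1 / enn2real p))"

definition conj_exp :: "ennreal \<Rightarrow> real" where
  "conj_exp p = (if p = \<infinity> then 1 else 1 - 1 / enn2real p)"

end

theory Submission
  imports Defs
begin

lemma ennpow_meas[measurable]:
  assumes [measurable]: "f \<in> borel_measurable M"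
  shows "(\<lambda>x. ennpow (f x) r) \<in> borel_measurable M"
  unfolding ennpow_def by measurable

lemma ennpow_one[simp]: "ennpow x 1 = x"
  by (cases x) (auto simp: ennpow_def)

lemma ennpow_zero[simp]: "ennpow x 0 = 1"
  by (simp add: ennpow_def)

lemma ennpow_mono: "x \<le> y \<Longrightarrow> r \<ge> 0 \<Longrightarrow> ennpow x r \<le> ennpow y r"
  by (auto simp: ennpow_def top_unique less_top[symmetric] intro!: ennreal_leI powr_mono2 enn2real_mono)

lemma ennpow_pos: "x > 0 \<Longrightarrow> ennpow x r > 0"
  apply (cases x) apply (auto simp: ennpow_def)
  done

lemma ennpow_top: "r > 0 \<Longrightarrow> ennpow \<infinity> r = \<infinity>"
  by (simp add: ennpow_def)

lemma ennpow_real: "t \<ge> 0 \<Longrightarrow> r \<noteq> 0 \<Longrightarrow> ennpow (ennreal t) r = ennreal (t powr r)"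
  by (simp add: ennpow_def)


lemma young_pt:
  fixes t a b r q :: real
  assumes "t \<ge> 0" "a > 0" "b > 0" "r > 1" "q > 1" "1/r + 1/q = 1"
  shows "t \<le> a*b/(r * a powr r) * t powr r + a*b/(q * b powr q)"
proof -
  have "(t/a) * (1/b) \<le> (t/a) powr r / r + (1/b) powr q / q"
    using Youngs_inequality[of r q "t/a" "1/b"] assms by auto
  also have "(t/a) powr r = t powr r / a powr r" using assms by (simp add: powr_divide)
  also have "(1/b) powr q = 1 / b powr q" using assms by (simp add: powr_divide)
  finally have "(t/a) * (1/b) \<le> t powr r / a powr r / r + 1 / b powr q / q" .
  then have "a*b*((t/a) * (1/b)) \<le> a*b*(t powr r / a powr r / r + 1 / b powr q / q)"
    using assms by (intro mult_left_mono) auto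
  then show ?thesis using assms by (simp add: field_simps)
qed

lemma holder_main:
  fixes r :: real
  assumes f[measurable]: "f \<in> borel_measurable M" and A[measurable]: "A \<in> sets M" and r: "r > 1"
  shows "(\<integral>\<^sup>+x. indicator A x * f x \<partial>M)
     \<le> ennpow (\<integral>\<^sup>+x. ennpow (f x) r \<partial>M) (1/r) * ennpow (emeasure M A) (1 - 1/r)"
proof -
  define I where "I = (\<integral>\<^sup>+x. ennpow (f x) r \<partial>M)"
  define m where "m = emeasure M A"
  have s0: "1 - 1/r > 0" "1/r > 0" using r by (auto simp: field_simps)
  have LHS_le: "(\<integral>\<^sup>+x. indicator A x * f x \<partial>M) \<le> \<infinity> * m"
  proof -
    have "(\<integral>\<^sup>+x. indicator A x * f x \<partial>M) \<le> (\<integral>\<^sup>+x. \<infinity> * indicator A x \<partial>M)"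
      by (intro nn_integral_mono) (auto simp: indicator_def)
    also have "\<dots> = \<infinity> * m" unfolding m_def by (rule nn_integral_cmult_indicator[OF A])
    finally show ?thesis .
  qed
  show ?thesis
  proof (cases "m = 0")
    case True
    with LHS_le show ?thesis by simp
  next
    case m0: False
    show ?thesis
    proof (cases "I = 0")
      case True
      have "AE x in M. ennpow (f x) r = 0"
        using True unfolding I_def by (subst (asm) nn_integral_0_iff_AE) auto
      then have "AE x in M. indicator A x * f x = 0"
      proof (rule AE_mp, intro AE_I2 impI)
        fix x assume "ennpow (f x) r = 0"
        then have "f x = 0" using r
          by (cases "f x") (auto simp: ennpow_def)
        then show "indicator A x * f x = 0" by simp
      qed
      then have "(\<integral>\<^sup>+x. indicator A x * f x \<partial>M) = 0"
        by (subst nn_integral_0_iff_AE) auto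
      then show ?thesis unfolding I_def[symmetric] m_def[symmetric] by simp
    next
      case I0: False
      show ?thesis
      proof (cases "I = \<infinity> \<or> m = \<infinity>")
        case True
        have "ennpow I (1/r) > 0" "ennpow m (1 - 1/r) > 0"
          using I0 m0 ennpow_pos[of I "1/r"] ennpow_pos[of m "1-1/r"] by (auto simp: zero_less_iff_neq_zero)
        then have "ennpow I (1/r) * ennpow m (1 - 1/r) = \<infinity>"
          using True ennpow_top[OF s0(1)] ennpow_top[OF s0(2)] by (auto simp: ennreal_mult_eq_top_iff)
        then show ?thesis unfolding I_def[symmetric] m_def[symmetric] by simp
      next
        case False
        define Ir where "Ir = enn2real I"
        define mr where "mr = enn2real m"
        have I_eq: "I = ennreal Ir" and m_eq: "m = ennreal mr"
          using False by (auto simp: Ir_def mr_def ennreal_enn2real_if)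
        have Ir: "Ir > 0" and mr: "mr > 0" using I0 m0 False
          by (auto simp: Ir_def mr_def enn2real_positive_iff zero_less_iff_neq_zero less_top[symmetric])
        define q where "q = r / (r - 1)"
        have q: "q > 1" "1/r + 1/q = 1" "1/q = 1 - 1/r" using r by (auto simp: q_def field_simps)
        define a where "a = Ir powr (1/r)"
        define b where "b = mr powr (1/q)"
        have a: "a > 0" "a powr r = Ir" using Ir r by (auto simp: a_def powr_powr)
        have b: "b > 0" "b powr q = mr" using mr q(1) by (auto simp: b_def powr_powr)
        define c1 where "c1 = a*b/(r * a powr r)"
        define c2 where "c2 = a*b/(q * b powr q)"
        have c: "c1 \<ge> 0" "c2 \<ge> 0" "c1 > 0" using a b r q by (auto simp: c1_def c2_def)
        have pt: "indicator A x * f x \<le> ennreal c1 * ennpow (f x) r + ennreal c2 * indicator A x" for x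
        proof (cases "x \<in> A")
          case False
          then show ?thesis by simp
        next
          case xA: True
          show ?thesis
          proof (cases "f x")
            case (real t)
            have "t \<le> c1 * t powr r + c2"
              unfolding c1_def c2_def using young_pt[of t a b r q] real a b r q by auto
            then have "ennreal t \<le> ennreal (c1 * t powr r + c2)"
              by (rule ennreal_leI)
            also have "\<dots> = ennreal c1 * ennreal (t powr r) + ennreal c2"
              using c by (simp add: ennreal_plus ennreal_mult)
            finally have "ennreal t \<le> ennreal c1 * ennreal (t powr r) + ennreal c2" .
            moreover have "ennpow (f x) r = ennreal (t powr r)"
              using real r ennpow_real[of t r] by simp
            ultimately show ?thesis using real xA by simp
          next
            case top
            have "ennpow (f x) r = \<infinity>" using top r ennpow_top[of r] by simp
            moreover have "ennreal c1 * \<infinity> = \<infinity>" using c(3) by (simp add: ennreal_mult_top)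
            ultimately show ?thesis by simp
          qed
        qed
        have "(\<integral>\<^sup>+x. indicator A x * f x \<partial>M) \<le> (\<integral>\<^sup>+x. ennreal c1 * ennpow (f x) r + ennreal c2 * indicator A x \<partial>M)"
          by (intro nn_integral_mono pt)
        also have "\<dots> = ennreal c1 * I + ennreal c2 * m"
          by (subst nn_integral_add) (auto simp: nn_integral_cmult I_def m_def nn_integral_cmult_indicator)
        also have "\<dots> = ennreal (c1 * Ir + c2 * mr)"
          using c Ir mr I_eq m_eq by (simp add: ennreal_mult ennreal_plus)
        also have "c1 * Ir + c2 * mr = a * b"
          proof -
          have "c1 * Ir = a*b/r" using a Ir by (simp add: c1_def)
          moreover have "c2 * mr = a*b/q" using b mr by (simp add: c2_def)
          moreover have "a*b/r + a*b/q = a*b*(1/r + 1/q)" by (simp add: field_simps)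
          ultimately show ?thesis using q(2) by simp
        qed
        also have "ennreal (a * b) = ennpow I (1/r) * ennpow m (1 - 1/r)"
          using a b Ir mr r q by (simp add: I_eq m_eq ennpow_real a_def b_def ennreal_mult)
        finally show ?thesis unfolding I_def m_def .
      qed
    qed
  qed
qed


lemma holder_Lp:
  assumes f[measurable]: "f \<in> borel_measurable M" and A[measurable]: "A \<in> sets M" and p: "p \<ge> 1"
  shows "(\<integral>\<^sup>+x. indicator A x * f x \<partial>M) \<le> Lp_norm M p f * ennpow (emeasure M A) (conj_exp p)"
proof (cases "p = \<infinity>")
  case True
  have "(\<integral>\<^sup>+x. indicator A x * f x \<partial>M) \<le> (\<integral>\<^sup>+x. esssup M f * indicator A x \<partial>M)"
    by (rule nn_integral_mono_AE) (use esssup_AE[of f M] in \<open>auto simp: indicator_def\<close>)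
  also have "\<dots> = esssup M f * emeasure M A" by (rule nn_integral_cmult_indicator[OF A])
  finally show ?thesis using True by (simp add: Lp_norm_def conj_exp_def)
next
  case False
  define r where "r = enn2real p"
  have p_eq: "p = ennreal r" using False by (simp add: r_def ennreal_enn2real_if)
  have r1: "r \<ge> 1" using p p_eq by (simp add: ennreal_ge_1)
  show ?thesis
  proof (cases "r = 1")
    case True
    have "(\<integral>\<^sup>+x. indicator A x * f x \<partial>M) \<le> (\<integral>\<^sup>+x. f x \<partial>M)"
      by (intro nn_integral_mono) (auto simp: indicator_def)
    then show ?thesis using True False by (simp add: Lp_norm_def conj_exp_def r_def)
  next
    case r1': False
    then have "r > 1" using r1 by simp
    from holder_main[OF f A this] show ?thesis
      using False by (simp add: Lp_norm_def conj_exp_def r_def)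
  qed
qed

theorem proposition2p1:
  fixes M :: "'a measure" and N :: "'e measure"
    and V :: "'e \<Rightarrow> ennreal" and Z :: "nat \<Rightarrow> 'a \<Rightarrow> 'e"
    and \<gamma> :: "nat \<Rightarrow> real" and \<delta> :: "nat \<Rightarrow> ennreal" and \<Omega> :: "nat \<Rightarrow> 'a set"
    and n :: nat and p :: ennreal and Vbar :: "'e \<Rightarrow> ennreal"
  assumes "prob_space M"
    and V_meas: "V \<in> borel_measurable N"
    and Z_meas: "\<And>k. Z k \<in> measurable M N"
    and \<gamma>_nonneg: "\<And>k. \<gamma> k \<ge> 0"
    and \<delta>_pos: "\<And>k. \<delta> k > 0"
    and \<Omega>_sets: "\<And>k. \<Omega> k \<in> sets M"
    and \<Omega>0: "\<Omega> 0 = space M"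
    and \<Omega>_diff: "\<And>k. \<Omega> k - \<Omega> (Suc k) \<subseteq> {\<omega> \<in> space M. V (Z k \<omega>) > \<delta> k}"
    and decay: "\<And>k. (\<integral>\<^sup>+ \<omega>. indicator (\<Omega> (Suc k)) \<omega> * V (Z (Suc k) \<omega>) \<partial>M)
                 \<le> ennreal (\<gamma> k) * (\<integral>\<^sup>+ \<omega>. indicator (\<Omega> k) \<omega> * V (Z k \<omega>) \<partial>M)"
    and p_ge: "p \<ge> 1"
    and Vbar_meas: "Vbar \<in> borel_measurable N"
    and Vbar_le: "\<And>x. x \<in> space N \<Longrightarrow> Vbar x \<le> V x"
  shows "(\<integral>\<^sup>+ \<omega>. indicator (\<Omega> n) \<omega> * V (Z n \<omega>) \<partial>M)
           \<le> (\<Prod>k<n. ennreal (\<gamma> k)) * (\<integral>\<^sup>+ \<omega>. V (Z 0 \<omega>) \<partial>M)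
       \<and> emeasure M (space M - \<Omega> n)
           \<le> (\<Sum>k<n. (\<Prod>l<k. ennreal (\<gamma> l)) / \<delta> k) * (\<integral>\<^sup>+ \<omega>. V (Z 0 \<omega>) \<partial>M)
       \<and> (\<integral>\<^sup>+ \<omega>. Vbar (Z n \<omega>) \<partial>M)
           \<le> (\<Prod>k<n. ennreal (\<gamma> k)) * (\<integral>\<^sup>+ \<omega>. V (Z 0 \<omega>) \<partial>M)
             + Lp_norm M p (\<lambda>\<omega>. Vbar (Z n \<omega>))
               * ennpow ((\<Sum>k<n. (\<Prod>l<k. ennreal (\<gamma> l)) / \<delta> k) * (\<integral>\<^sup>+ \<omega>. V (Z 0 \<omega>) \<partial>M))
                        (conj_exp p)"
proof -
  interpret prob_space M by fact
  have VZ[measurable]: "(\<lambda>\<omega>. V (Z k \<omega>)) \<in> borel_measurable M" for k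
    using measurable_compose[OF Z_meas V_meas] by (simp add: comp_def)
  have VbZ[measurable]: "(\<lambda>\<omega>. Vbar (Z k \<omega>)) \<in> borel_measurable M" for k
    using measurable_compose[OF Z_meas Vbar_meas] by (simp add: comp_def)
  have [measurable]: "\<Omega> k \<in> sets M" for k by (rule \<Omega>_sets)
  define E0 where "E0 = (\<integral>\<^sup>+ \<omega>. V (Z 0 \<omega>) \<partial>M)"
  define P where "P k = (\<Prod>l<k. ennreal (\<gamma> l))" for k
  define S where "S k = (\<Sum>j<k. (\<Prod>l<j. ennreal (\<gamma> l)) / \<delta> j)" for k
  have P1: "(\<integral>\<^sup>+ \<omega>. indicator (\<Omega> k) \<omega> * V (Z k \<omega>) \<partial>M) \<le> P k * E0" for k
  proof (induction k)
    case 0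
    have "(\<integral>\<^sup>+ \<omega>. indicator (\<Omega> 0) \<omega> * V (Z 0 \<omega>) \<partial>M) = E0"
      unfolding E0_def \<Omega>0 by (intro nn_integral_cong) auto
    then show ?case by (simp add: P_def)
  next
    case (Suc k)
    have "(\<integral>\<^sup>+ \<omega>. indicator (\<Omega> (Suc k)) \<omega> * V (Z (Suc k) \<omega>) \<partial>M)
       \<le> ennreal (\<gamma> k) * (\<integral>\<^sup>+ \<omega>. indicator (\<Omega> k) \<omega> * V (Z k \<omega>) \<partial>M)" by (rule decay)
    also have "\<dots> \<le> ennreal (\<gamma> k) * (P k * E0)" by (intro mult_left_mono Suc) auto
    also have "\<dots> = P (Suc k) * E0" by (simp add: P_def ac_simps)
    finally show ?case .
  qed
  have step: "emeasure M (\<Omega> k - \<Omega> (Suc k)) \<le> (P k / \<delta> k) * E0" for k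
  proof -
    let ?B = "\<Omega> k - \<Omega> (Suc k)"
    have B[measurable]: "?B \<in> sets M" by auto
    have "\<delta> k * emeasure M ?B = (\<integral>\<^sup>+ \<omega>. \<delta> k * indicator ?B \<omega> \<partial>M)"
      by (simp add: nn_integral_cmult_indicator)
    also have "\<dots> \<le> (\<integral>\<^sup>+ \<omega>. indicator (\<Omega> k) \<omega> * V (Z k \<omega>) \<partial>M)"
      using \<Omega>_diff[of k] by (intro nn_integral_mono) (auto simp: indicator_def less_imp_le)
    also have "\<dots> \<le> P k * E0" by (rule P1)
    finally have le: "\<delta> k * emeasure M ?B \<le> P k * E0" .
    show ?thesis
    proof (cases "\<delta> k = \<infinity>")
      case True
      have "?B = {}" using \<Omega>_diff[of k] True by auto
      then have "emeasure M ?B = 0" by (simp only: emeasure_empty)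
      then show ?thesis by simp
    next
      case False
      have "emeasure M ?B = (\<delta> k * emeasure M ?B) / \<delta> k"
        using False \<delta>_pos[of k] ennreal_mult_divide_eq[of "\<delta> k" "emeasure M ?B"] by (simp add: mult.commute)
      also have "\<dots> \<le> (P k * E0) / \<delta> k" by (rule divide_right_mono_ennreal[OF le])
      also have "\<dots> = (P k / \<delta> k) * E0" by (simp add: ennreal_times_divide mult.commute)
      finally show ?thesis .
    qed
  qed
  have P2: "emeasure M (space M - \<Omega> k) \<le> S k * E0" for k
  proof (induction k)
    case 0
    then show ?case by (simp add: \<Omega>0)
  next
    case (Suc k)
    have "space M - \<Omega> (Suc k) \<subseteq> (space M - \<Omega> k) \<union> (\<Omega> k - \<Omega> (Suc k))" by auto
    then have "emeasure M (space M - \<Omega> (Suc k)) \<le> emeasure M ((space M - \<Omega> k) \<union> (\<Omega> k - \<Omega> (Suc k)))"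
      by (intro emeasure_mono) auto
    also have "\<dots> \<le> emeasure M (space M - \<Omega> k) + emeasure M (\<Omega> k - \<Omega> (Suc k))"
      by (intro emeasure_subadditive) auto
    also have "\<dots> \<le> S k * E0 + (P k / \<delta> k) * E0" by (intro add_mono Suc step)
    also have "\<dots> = S (Suc k) * E0" by (simp add: S_def P_def distrib_right)
    finally show ?case .
  qed
  let ?A = "space M - \<Omega> n"
  have "(\<integral>\<^sup>+ \<omega>. Vbar (Z n \<omega>) \<partial>M)
      = (\<integral>\<^sup>+ \<omega>. indicator (\<Omega> n) \<omega> * Vbar (Z n \<omega>) + indicator ?A \<omega> * Vbar (Z n \<omega>) \<partial>M)"
    by (intro nn_integral_cong) (auto simp: indicator_def)
  also have "\<dots> = (\<integral>\<^sup>+ \<omega>. indicator (\<Omega> n) \<omega> * Vbar (Z n \<omega>) \<partial>M) + (\<integral>\<^sup>+ \<omega>. indicator ?A \<omega> * Vbar (Z n \<omega>) \<partial>M)"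
    by (intro nn_integral_add) auto
  also have "\<dots> \<le> P n * E0 + Lp_norm M p (\<lambda>\<omega>. Vbar (Z n \<omega>)) * ennpow (S n * E0) (conj_exp p)"
  proof (intro add_mono)
    have "(\<integral>\<^sup>+ \<omega>. indicator (\<Omega> n) \<omega> * Vbar (Z n \<omega>) \<partial>M) \<le> (\<integral>\<^sup>+ \<omega>. indicator (\<Omega> n) \<omega> * V (Z n \<omega>) \<partial>M)"
      using Z_meas[of n] Vbar_le
      by (intro nn_integral_mono mult_left_mono) (auto simp: measurable_space)
    also have "\<dots> \<le> P n * E0" by (rule P1)
    finally show "(\<integral>\<^sup>+ \<omega>. indicator (\<Omega> n) \<omega> * Vbar (Z n \<omega>) \<partial>M) \<le> P n * E0" .
    have ce: "conj_exp p \<ge> 0"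
    proof (cases "p = \<infinity>")
      case False
      then have "enn2real p \<ge> 1" using p_ge
      proof -
        have "p = ennreal (enn2real p)" using False by (simp add: ennreal_enn2real_if)
        then show ?thesis using p_ge by (metis ennreal_ge_1)
      qed
      then show ?thesis using False by (simp add: conj_exp_def)
    qed (simp add: conj_exp_def)
    have "(\<integral>\<^sup>+ \<omega>. indicator ?A \<omega> * Vbar (Z n \<omega>) \<partial>M)
       \<le> Lp_norm M p (\<lambda>\<omega>. Vbar (Z n \<omega>)) * ennpow (emeasure M ?A) (conj_exp p)"
      by (rule holder_Lp) (use p_ge in auto)
    also have "\<dots> \<le> Lp_norm M p (\<lambda>\<omega>. Vbar (Z n \<omega>)) * ennpow (S n * E0) (conj_exp p)"
      by (intro mult_left_mono ennpow_mono P2 ce) auto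
    finally show "(\<integral>\<^sup>+ \<omega>. indicator ?A \<omega> * Vbar (Z n \<omega>) \<partial>M)
       \<le> Lp_norm M p (\<lambda>\<omega>. Vbar (Z n \<omega>)) * ennpow (S n * E0) (conj_exp p)" .
  qed
  finally show ?thesis using P1[of n] P2[of n] unfolding P_def S_def E0_def by simp
qed

end
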